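(* Let $\alpha\in\mathbb{C}$ with $\Re(\alpha)>-1/2$. Then the monic polynomial sequence $\{P_n(x;\alpha)\}_{n\ge0}$ is not regularly orthogonal: there is no form $v\in\mathcal{P}'$ such that $\langle v,P_n(\cdot;\alpha)P_m(\cdot;\alpha)\rangle=k_n\delta_{n,m}$ with $k_n\neq0$ for all $n,m\in\mathbb{N}_0$.
   Context: Let $\mathcal{A}$ be the differential operator $\mathcal{A}f(x)=-x^2f''(x)-xf'(x)+x^2f(x)$ with iterates $\mathcal{A}^n$. For $\Re(\alpha)>-1/2$, $p_n(x;\alpha)=(-1)^n e^{x}x^{-\alpha}\mathcal{A}^n(e^{-x}x^{\alpha})$ is a polynomial of degree $n$ with leading coefficient $(-2)^n(\alpha+1/2)_n$, and $P_n(x;\alpha)=p_n(x;\alpha)/\big((-2)^n(\alpha+1/2)_n\big)$. $\mathcal{P}'$ is the algebraic dual of the space $\mathcal{P}$ of complex polynomials; $(y)_n$ is the Pochhammer symbol. *)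

theory Defs
  imports "HOL-Analysis.Analysis" "HOL-Computational_Algebra.Polynomial"
begin

text \<open>The differential operator A f (x) = - x^2 f''(x) - x f'(x) + x^2 f(x),
  acting on complex functions (complex derivative); we only evaluate at x > 0,
  where all functions involved are holomorphic (principal branch of powr).\<close>
definition opA :: "(complex \<Rightarrow> complex) \<Rightarrow> (complex \<Rightarrow> complex)" where
  "opA f = (\<lambda>x. - (x^2) * deriv (deriv f) x - x * deriv f x + x^2 * f x)"

definition p_fun :: "nat \<Rightarrow> complex \<Rightarrow> complex \<Rightarrow> complex" where
  "p_fun n \<alpha> x = (-1)^n * exp x * x powr (-\<alpha>) *
      (opA ^^ n) (\<lambda>y. exp (-y) * y powr \<alpha>) x"

text \<open>The monic polynomial P_n(x;alpha) = p_n(x;alpha) / ((-2)^n (alpha+1/2)_n),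
  as the (unique) polynomial agreeing with it on the positive real axis.\<close>
definition P_poly :: "nat \<Rightarrow> complex \<Rightarrow> complex poly" where
  "P_poly n \<alpha> = (THE q. \<forall>x::real. x > 0 \<longrightarrow>
      poly q (of_real x) = p_fun n \<alpha> (of_real x) / ((-2)^n * pochhammer (\<alpha> + 1/2) n))"

definition is_form :: "(complex poly \<Rightarrow> complex) \<Rightarrow> bool" where
  "is_form v \<longleftrightarrow> (\<forall>p q. v (p + q) = v p + v q) \<and> (\<forall>c p. v (smult c p) = c * v p)"

end

theory Submission
  imports Defs
begin


definition GG :: "complex \<Rightarrow> complex \<Rightarrow> complex" where
  "GG a y = exp (-y) * y powr a"

lemma S_open: "open {z::complex. 0 < Re z}"
  by (simp add: open_halfspace_Re_gt)

lemma S_nonpos: "0 < Re z \<Longrightarrow> z \<notin> \<real>\<^sub>\<le>\<^sub>0"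
  by (auto simp: complex_nonpos_Reals_iff)

lemma powr_m1: "z \<noteq> 0 \<Longrightarrow> (z::complex) powr (a - 1) = z powr a / z"
  by (simp add: powr_def algebra_simps exp_diff)

lemma GG_deriv:
  assumes "0 < Re y" "(R has_field_derivative R') (at y)"
  shows "((\<lambda>y. GG a y * R y) has_field_derivative GG a y * (R' + R y * (a / y - 1))) (at y)"
proof -
  have y0: "y \<noteq> 0" using assms by auto
  have d: "((\<lambda>y. y powr a) has_field_derivative a * y powr (a - 1)) (at y)"
    by (rule has_field_derivative_powr[OF S_nonpos[OF assms(1)]])
  have "((\<lambda>y. exp (-y) * y powr a * R y) has_field_derivative
     (exp (-y) * y powr a) * R' + (exp (-y) * (a * y powr (a - 1)) + exp (-y) * (-1) * y powr a) * R y) (at y)"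
  proof (rule DERIV_mult'[OF DERIV_mult' assms(2)])
    show "((\<lambda>y. exp (- y)) has_field_derivative exp (- y) * - 1) (at y)"
      by (auto intro!: derivative_eq_intros)
  qed (rule d)
  moreover have "(exp (-y) * y powr a) * R' + (exp (-y) * (a * y powr (a - 1)) + exp (-y) * (-1) * y powr a) * R y
     = GG a y * (R' + R y * (a / y - 1))"
    using y0 by (simp add: GG_def powr_m1 field_simps)
  ultimately show ?thesis unfolding GG_def by simp
qed

definition Bop :: "complex \<Rightarrow> complex poly \<Rightarrow> complex poly" where
  "Bop a q = [:0,0,1:] * pderiv (pderiv q) - [:0, -(2*a+1), 2:] * pderiv q - [:-(a^2), 2*a+1:] * q"

lemma opA_step:
  assumes f: "\<forall>z. 0 < Re z \<longrightarrow> f z = GG a z * poly q z" and y: "0 < Re y"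
  shows "opA f y = - GG a y * poly (Bop a q) y"
proof -
  define R1 where "R1 z = poly (pderiv q) z + poly q z * (a / z - 1)" for z
  define R1' where "R1' z = poly (pderiv (pderiv q)) z + poly (pderiv q) z * (a / z - 1) + poly q z * (- a / z^2)" for z
  have d1: "deriv f z = GG a z * R1 z" if z: "0 < Re z" for z
  proof -
    have "eventually (\<lambda>w. w \<in> {w. 0 < Re w}) (nhds z)"
      using S_open z by (intro eventually_nhds_in_open) auto
    then have "eventually (\<lambda>w. f w = GG a w * poly q w) (nhds z)"
      by (rule eventually_mono) (use f in auto)
    then have "deriv f z = deriv (\<lambda>w. GG a w * poly q w) z"
      by (rule deriv_cong_ev) simp
    also have "\<dots> = GG a z * R1 z"
      unfolding R1_def by (rule DERIV_imp_deriv[OF GG_deriv[OF z poly_DERIV]])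
    finally show ?thesis .
  qed
  have dR1: "(R1 has_field_derivative R1' z) (at z)" if z: "0 < Re z" for z
  proof -
    have z0: "z \<noteq> 0" using z by auto
    have h: "((\<lambda>z. a / z - 1) has_field_derivative -a/z^2) (at z)"
      using z0 by (auto intro!: derivative_eq_intros simp: field_simps power2_eq_square)
    have "(R1 has_field_derivative poly (pderiv (pderiv q)) z + (poly q z * (-a/z^2) + poly (pderiv q) z * (a/z-1))) (at z)"
      unfolding R1_def[abs_def] by (intro DERIV_add poly_DERIV DERIV_mult' h)
    then show ?thesis unfolding R1'_def by (simp add: algebra_simps)
  qed
  have d2: "deriv (deriv f) y = GG a y * (R1' y + R1 y * (a / y - 1))"
  proof -
    have "eventually (\<lambda>w. w \<in> {w. 0 < Re w}) (nhds y)"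
      using S_open y by (intro eventually_nhds_in_open) auto
    then have "eventually (\<lambda>w. deriv f w = GG a w * R1 w) (nhds y)"
      by (rule eventually_mono) (use d1 in auto)
    then have "deriv (deriv f) y = deriv (\<lambda>w. GG a w * R1 w) y"
      by (rule deriv_cong_ev) simp
    also have "\<dots> = GG a y * (R1' y + R1 y * (a / y - 1))"
      by (rule DERIV_imp_deriv[OF GG_deriv[OF y dR1[OF y]]])
    finally show ?thesis .
  qed
  have y0: "y \<noteq> 0" using y by auto
  show ?thesis
  proof -
    have e: "poly (Bop a q) y = y^2 * poly (pderiv (pderiv q)) y - (-(2*a+1)*y + 2*y^2) * poly (pderiv q) y
        - (-(a^2) + (2*a+1)*y) * poly q y"
      by (simp add: Bop_def algebra_simps power2_eq_square)
    have k: "- (y^2 * (R1' y + R1 y * (a / y - 1))) - y * R1 y + y^2 * poly q y = - poly (Bop a q) y"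
      unfolding e R1_def R1'_def using y0 by (simp add: field_simps power2_eq_square)
    have "opA f y = GG a y * (- (y^2 * (R1' y + R1 y * (a / y - 1))) - y * R1 y + y^2 * poly q y)"
      unfolding opA_def d2 d1[OF y] f[rule_format, OF y] by (simp add: algebra_simps)
    then show ?thesis using k by simp
  qed
qed


lemma Bop_smult: "Bop a (smult s q) = smult s (Bop a q)"
  by (simp add: Bop_def pderiv_smult smult_diff_right mult_smult_right)

definition pp :: "complex \<Rightarrow> nat \<Rightarrow> complex poly" where
  "pp a n = (Bop a ^^ n) 1"

lemma iter:
  "0 < Re y \<Longrightarrow> (opA ^^ n) (GG a) y = GG a y * poly (smult ((-1)^n) (pp a n)) y"
proof (induction n arbitrary: y)
  case 0
  then show ?case by (simp add: pp_def)
next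
  case (Suc n)
  have "(opA ^^ Suc n) (GG a) y = opA ((opA ^^ n) (GG a)) y" by simp
  also have "\<dots> = - GG a y * poly (Bop a (smult ((-1)^n) (pp a n))) y"
    by (rule opA_step) (use Suc in auto)
  also have "\<dots> = GG a y * poly (smult ((-1)^Suc n) (pp a (Suc n))) y"
    by (simp add: Bop_smult pp_def)
  finally show ?case .
qed

lemma p_fun_eq:
  assumes "x > 0"
  shows "p_fun n a (of_real x) = poly (pp a n) (of_real x)"
proof -
  have G: "(\<lambda>y. exp (-y) * y powr a) = GG a" by (simp add: GG_def[abs_def])
  have x0: "(of_real x :: complex) \<noteq> 0" using assms by simp
  have xr: "0 < Re (complex_of_real x)" using assms by simp
  have e: "exp (complex_of_real x) * exp (- complex_of_real x) = 1"
    by (simp add: exp_minus)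
  have w: "complex_of_real x powr (-a) * complex_of_real x powr a = 1"
    using x0 by (simp add: powr_def flip: exp_add)
  have "p_fun n a (of_real x) = ((-1)^n * (-1)^n) * (exp (of_real x) * exp (- of_real x)) *
      (complex_of_real x powr (-a) * complex_of_real x powr a) * poly (pp a n) (of_real x)"
    unfolding p_fun_def G iter[of "of_real x", OF xr]
    by (simp add: GG_def algebra_simps)
  also have "\<dots> = poly (pp a n) (of_real x)"
    unfolding e w by (simp flip: power_mult_distrib)
  finally show ?thesis .
qed

lemma poly_unique_pos:
  fixes q r :: "complex poly"
  assumes "\<forall>x::real. x > 0 \<longrightarrow> poly q (of_real x) = F x"
      and "\<forall>x::real. x > 0 \<longrightarrow> poly r (of_real x) = F x"
  shows "q = r"
proof (rule ccontr)
  assume "q \<noteq> r"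
  then have "q - r \<noteq> 0" by simp
  then have fin: "finite {z. poly (q - r) z = 0}" by (rule poly_roots_finite)
  have "of_real ` ({0<..}::real set) \<subseteq> {z. poly (q - r) z = 0}"
    using assms by auto
  then have "finite (complex_of_real ` ({0<..}::real set))" using fin finite_subset by blast
  then have "finite ({0<..}::real set)"
    using finite_imageD inj_of_real inj_on_subset by blast
  then show False using infinite_Ioi by blast
qed

lemma P_poly_eq:
  "P_poly n a = smult (1 / ((-2)^n * pochhammer (a + 1/2) n)) (pp a n)"
  unfolding P_poly_def
proof (rule the_equality)
  show "\<forall>x::real. 0 < x \<longrightarrow> poly (smult (1 / ((-2)^n * pochhammer (a + 1/2) n)) (pp a n)) (of_real x) =
      p_fun n a (of_real x) / ((-2)^n * pochhammer (a + 1/2) n)"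
    by (simp add: p_fun_eq)
  show "q = smult (1 / ((-2)^n * pochhammer (a + 1/2) n)) (pp a n)"
    if "\<forall>x::real. 0 < x \<longrightarrow> poly q (of_real x) = p_fun n a (of_real x) / ((-2)^n * pochhammer (a + 1/2) n)" for q
    by (rule poly_unique_pos[OF that]) (simp add: p_fun_eq)
qed


lemma pp_Suc: "pp a (Suc n) = Bop a (pp a n)" by (simp add: pp_def)

lemma pp_step: "pp a (Suc n) = Bop a (pp a n)" by (simp add: pp_def)

lemma pp1: "pp a 1 = [:a^2, -(2*a+1):]"
proof -
  have "pp a 1 = Bop a 1" by (simp add: pp_def)
  then show ?thesis by (simp add: Bop_def pderiv_pCons algebra_simps power2_eq_square)
qed

lemma pp2: "pp a 2 = [:a^4, -(1+4*a+6*a^2+4*a^3), 3+8*a+4*a^2:]"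
proof -
  have "pp a 2 = Bop a (pp a 1)" by (simp add: pp_def eval_nat_numeral)
  then show ?thesis unfolding pp1
    by (simp add: Bop_def pderiv_pCons algebra_simps) (simp add: power2_eq_square power3_eq_cube power4_eq_xxxx algebra_simps)
qed


lemma pp3: "pp a 3 = [:a^6, -(1+6*a+15*a^2+20*a^3+15*a^4+6*a^5), 15+58*a+77*a^2+48*a^3+12*a^4, -(15+46*a+36*a^2+8*a^3):]"
proof -
  have "pp a 3 = Bop a (pp a 2)" by (simp add: pp_def eval_nat_numeral)
  then show ?thesis unfolding pp2
    by (simp add: Bop_def pderiv_pCons algebra_simps) (simp add: eval_nat_numeral algebra_simps)
qed

lemma pp4: "pp a 4 = [:a^8, -(1+8*a+28*a^2+56*a^3+70*a^4+56*a^5+28*a^6+8*a^7),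
   63+312*a+612*a^2+648*a^3+402*a^4+144*a^5+24*a^6, -(210+824*a+1116*a^2+728*a^3+240*a^4+32*a^5),
   105+352*a+344*a^2+128*a^3+16*a^4:]"
proof -
  have "pp a 4 = Bop a (pp a 3)" by (simp add: pp_def eval_nat_numeral)
  then show ?thesis unfolding pp3
    by (simp add: Bop_def pderiv_pCons algebra_simps) (simp add: eval_nat_numeral algebra_simps)
qed


lemma form_add: "is_form v \<Longrightarrow> v (p + q) = v p + v q" by (simp add: is_form_def)
lemma form_smult: "is_form v \<Longrightarrow> v (smult c p) = c * v p" by (simp add: is_form_def)
lemma form_0: "is_form v \<Longrightarrow> v 0 = 0"
  using form_smult[of v 0 0] by simp

definition mom :: "(complex poly \<Rightarrow> complex) \<Rightarrow> nat \<Rightarrow> complex" where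
  "mom v k = v (monom 1 k)"

definition vs :: "(complex poly \<Rightarrow> complex) \<Rightarrow> nat \<Rightarrow> complex poly \<Rightarrow> complex" where
  "vs v k p = v (monom 1 k * p)"

lemma form_mon: "is_form v \<Longrightarrow> vs v k (pCons b p) = b * mom v k + vs v (k + 1) p"
proof -
  assume v: "is_form v"
  have "monom 1 k * pCons b p = smult b (monom 1 k) + monom 1 (Suc k) * p"
    by (simp add: mult_pCons_right monom_Suc)
  then show ?thesis by (simp add: vs_def form_add[OF v] form_smult[OF v] mom_def)
qed

lemma form_mon0: "is_form v \<Longrightarrow> vs v k 0 = 0" by (simp add: vs_def form_0)

lemma form_start: "v p = vs v 0 p" for v :: "complex poly \<Rightarrow> complex" by (simp add: vs_def)

lemma mom_num: "mom v (Suc 0) = mom v 1" "mom v (Suc (Suc 0)) = mom v 2" "mom v (Suc (Suc (Suc 0))) = mom v 3"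
  "mom v (Suc (Suc (Suc (Suc 0)))) = mom v 4"
  by (simp_all add: eval_nat_numeral)

lemma form_monk: assumes v: "is_form v"
  shows "vs v 0 (pCons b p) = b * mom v 0 + vs v 1 p" "vs v 1 (pCons b p) = b * mom v 1 + vs v 2 p"
    "vs v 2 (pCons b p) = b * mom v 2 + vs v 3 p" "vs v 3 (pCons b p) = b * mom v 3 + vs v 4 p"
    "vs v 4 (pCons b p) = b * mom v 4 + vs v 5 p"
  using form_mon[OF v, of 0] form_mon[OF v, of 1] form_mon[OF v, of 2] form_mon[OF v, of 3] form_mon[OF v, of 4]
  by (simp_all add: eval_nat_numeral)

lemma vpp1: "is_form v \<Longrightarrow> v (pp a 1) = (a^2) * mom v 0 + ((-(2*a+1)) * mom v 1)"
  unfolding pp1 by (subst form_start) (simp only: form_monk form_mon0 add_0_right)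
lemma vpp2: "is_form v \<Longrightarrow> v (pp a 2) = (a^4) * mom v 0 + ((-(1+4*a+6*a^2+4*a^3)) * mom v 1 + ((3+8*a+4*a^2) * mom v 2))"
  unfolding pp2 by (subst form_start) (simp only: form_monk form_mon0 add_0_right)
lemma vpp3: "is_form v \<Longrightarrow> v (pp a 3) = (a^6) * mom v 0 + ((-(1+6*a+15*a^2+20*a^3+15*a^4+6*a^5)) * mom v 1 + ((15+58*a+77*a^2+48*a^3+12*a^4) * mom v 2 + ((-(15+46*a+36*a^2+8*a^3)) * mom v 3)))"
  unfolding pp3 by (subst form_start) (simp only: form_monk form_mon0 add_0_right)
lemma vpp4: "is_form v \<Longrightarrow> v (pp a 4) = (a^8) * mom v 0 + ((-(1+8*a+28*a^2+56*a^3+70*a^4+56*a^5+28*a^6+8*a^7)) * mom v 1 + ((63+312*a+612*a^2+648*a^3+402*a^4+144*a^5+24*a^6) * mom v 2 + ((-(210+824*a+1116*a^2+728*a^3+240*a^4+32*a^5)) * mom v 3 + ((105+352*a+344*a^2+128*a^3+16*a^4) * mom v 4))))"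
  unfolding pp4 by (subst form_start) (simp only: form_monk form_mon0 add_0_right)
lemma vspp2: "is_form v \<Longrightarrow> vs v 1 (pp a 2) = (a^4) * mom v 1 + ((-(1+4*a+6*a^2+4*a^3)) * mom v 2 + ((3+8*a+4*a^2) * mom v 3))"
  unfolding pp2 by (simp only: form_monk form_mon0 add_0_right)
lemma vspp3: "is_form v \<Longrightarrow> vs v 1 (pp a 3) = (a^6) * mom v 1 + ((-(1+6*a+15*a^2+20*a^3+15*a^4+6*a^5)) * mom v 2 + ((15+58*a+77*a^2+48*a^3+12*a^4) * mom v 3 + ((-(15+46*a+36*a^2+8*a^3)) * mom v 4)))"
  unfolding pp3 by (simp only: form_monk form_mon0 add_0_right)

lemma vpp1_mult: "is_form v \<Longrightarrow> v (pp a 1 * q) = a^2 * v q - (2*a+1) * vs v 1 q"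
proof -
  assume v: "is_form v"
  have "pp a 1 * q = smult (a^2) q + smult (-(2*a+1)) (monom 1 1 * q)"
    unfolding pp1 by (simp add: monom_Suc monom_0)
  then show ?thesis by (simp add: form_add[OF v] form_smult[OF v] vs_def algebra_simps)
qed


lemma elim_alg:
  fixes a m0 m1 m2 m3 m4 :: complex
  assumes h1: "(a^2) * m0 + ((-(2*a+1)) * m1) = 0" and h2: "(a^4) * m0 + ((-(1+4*a+6*a^2+4*a^3)) * m1 + ((3+8*a+4*a^2) * m2)) = 0" and h3: "(a^6) * m0 + ((-(1+6*a+15*a^2+20*a^3+15*a^4+6*a^5)) * m1 + ((15+58*a+77*a^2+48*a^3+12*a^4) * m2 + ((-(15+46*a+36*a^2+8*a^3)) * m3))) = 0" and h4: "(a^8) * m0 + ((-(1+8*a+28*a^2+56*a^3+70*a^4+56*a^5+28*a^6+8*a^7)) * m1 + ((63+312*a+612*a^2+648*a^3+402*a^4+144*a^5+24*a^6) * m2 + ((-(210+824*a+1116*a^2+728*a^3+240*a^4+32*a^5)) * m3 + ((105+352*a+344*a^2+128*a^3+16*a^4) * m4)))) = 0"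
      and h5: "(a^4) * m1 + ((-(1+4*a+6*a^2+4*a^3)) * m2 + ((3+8*a+4*a^2) * m3)) = 0" and h6: "(a^6) * m1 + ((-(1+6*a+15*a^2+20*a^3+15*a^4+6*a^5)) * m2 + ((15+58*a+77*a^2+48*a^3+12*a^4) * m3 + ((-(15+46*a+36*a^2+8*a^3)) * m4))) = 0"
  shows "2*a^2*(2*a+1)^2*(2*a+3)*m0 = 0"
proof -
  have c5: "(- (21*a^2) - 206*a^3 - 836*a^4 - 1792*a^5 - 2152*a^6 - 1424*a^7 - 480*a^8 - 64*a^9) * m0 = (- (21) - 206*a - 866*a^2 - 2040*a^3 - 2964*a^4 - 2752*a^5 - 1600*a^6 - 512*a^7 - 64*a^8) * ((a^2) * m0 + ((-(2*a+1)) * m1)) + (30 + 248*a + 821*a^2 + 1394*a^3 + 1304*a^4 + 688*a^5 + 208*a^6 + 32*a^7) * ((a^4) * m0 + ((-(1+4*a+6*a^2+4*a^3)) * m1 + ((3+8*a+4*a^2) * m2))) + (- (9) - 66*a - 184*a^2 - 240*a^3 - 144*a^4 - 32*a^5) * ((a^6) * m0 + ((-(1+6*a+15*a^2+20*a^3+15*a^4+6*a^5)) * m1 + ((15+58*a+77*a^2+48*a^3+12*a^4) * m2 + ((-(15+46*a+36*a^2+8*a^3)) * m3)))) + (- (45) - 348*a - 1052*a^2 - 1568*a^3 - 1200*a^4 - 448*a^5 - 64*a^6) * ((a^4) * m1 + ((-(1+4*a+6*a^2+4*a^3)) * m2 + ((3+8*a+4*a^2) * m3)))"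
    by algebra
  have c6: "(- (6975*a^2) - 96060*a^3 - 588778*a^4 - 2119048*a^5 - 4974904*a^6 - 8003008*a^7 - 9017680*a^8 - 7150784*a^9 - 3952320*a^10 - 1483264*a^11 - 358656*a^12 - 50176*a^13 - 3072*a^14) * m0 = (- (6975) - 96060*a - 599803*a^2 - 2254618*a^3 - 5704148*a^4 - 10261680*a^5 - 13481544*a^6 - 13046736*a^7 - 9249952*a^8 - 4713280*a^9 - 1665664*a^10 - 384256*a^11 - 51712*a^12 - 3072*a^13) * ((a^2) * m0 + ((-(2*a+1)) * m1)) + (11025 + 135570*a + 733969*a^2 + 2312672*a^3 + 4729418*a^4 + 6632616*a^5 + 6569104*a^6 + 4652320*a^7 + 2349056*a^8 + 826752*a^9 + 192000*a^10 + 26112*a^11 + 1536*a^12) * ((a^4) * m0 + ((-(1+4*a+6*a^2+4*a^3)) * m1 + ((3+8*a+4*a^2) * m2))) + (- (4725) - 54000*a - 266229*a^2 - 743954*a^3 - 1304880*a^4 - 1507104*a^5 - 1172832*a^6 - 619456*a^7 - 220672*a^8 - 51712*a^9 - 7424*a^10 - 512*a^11) * ((a^6) * m0 + ((-(1+6*a+15*a^2+20*a^3+15*a^4+6*a^5)) * m1 + ((15+58*a+77*a^2+48*a^3+12*a^4) * m2 + ((-(15+46*a+36*a^2+8*a^3)) * m3)))) + (675 + 7290*a + 33408*a^2 + 84800*a^3 + 130784*a^4 + 126784*a^5 + 77312*a^6 + 28672*a^7 + 5888*a^8 + 512*a^9) * ((a^8) * m0 + ((-(1+8*a+28*a^2+56*a^3+70*a^4+56*a^5+28*a^6+8*a^7))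 * m1 + ((63+312*a+612*a^2+648*a^3+402*a^4+144*a^5+24*a^6) * m2 + ((-(210+824*a+1116*a^2+728*a^3+240*a^4+32*a^5)) * m3 + ((105+352*a+344*a^2+128*a^3+16*a^4) * m4))))) + (4725 + 52380*a + 248436*a^2 + 660416*a^3 + 1085088*a^4 + 1149056*a^5 + 794752*a^6 + 355328*a^7 + 98560*a^8 + 15360*a^9 + 1024*a^10) * ((a^6) * m1 + ((-(1+6*a+15*a^2+20*a^3+15*a^4+6*a^5)) * m2 + ((15+58*a+77*a^2+48*a^3+12*a^4) * m3 + ((-(15+46*a+36*a^2+8*a^3)) * m4))))"
    by algebra
  have z5: "(- (21*a^2) - 206*a^3 - 836*a^4 - 1792*a^5 - 2152*a^6 - 1424*a^7 - 480*a^8 - 64*a^9) * m0 = 0" using c5 h1 h2 h3 h5 by simp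
  have z6: "(- (6975*a^2) - 96060*a^3 - 588778*a^4 - 2119048*a^5 - 4974904*a^6 - 8003008*a^7 - 9017680*a^8 - 7150784*a^9 - 3952320*a^10 - 1483264*a^11 - 358656*a^12 - 50176*a^13 - 3072*a^14) * m0 = 0" using c6 h1 h2 h3 h4 h6 by simp
  have b: "(- (23457120) - 68526880*a - 126872672*a^2 - 289578688*a^3 - 512215296*a^4 - 485594112*a^5 - 236942848*a^6 - 56531968*a^7 - 5210112*a^8) * (- (21*a^2) - 206*a^3 - 836*a^4 - 1792*a^5 - 2152*a^6 - 1424*a^7 - 480*a^8 - 64*a^9) + (69584 - 64064*a + 218944*a^2 + 108544*a^3) * (- (6975*a^2) - 96060*a^3 - 588778*a^4 - 2119048*a^5 - 4974904*a^6 - 8003008*a^7 - 9017680*a^8 - 7150784*a^9 - 3952320*a^10 - 1483264*a^11 - 358656*a^12 - 50176*a^13 - 3072*a^14) = 1208520 * (2*a^2*(2*a+1)^2*(2*a+3))"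
    by algebra
  have "1208520 * (2*a^2*(2*a+1)^2*(2*a+3)) * m0 = ((- (23457120) - 68526880*a - 126872672*a^2 - 289578688*a^3 - 512215296*a^4 - 485594112*a^5 - 236942848*a^6 - 56531968*a^7 - 5210112*a^8) * (- (21*a^2) - 206*a^3 - 836*a^4 - 1792*a^5 - 2152*a^6 - 1424*a^7 - 480*a^8 - 64*a^9) + (69584 - 64064*a + 218944*a^2 + 108544*a^3) * (- (6975*a^2) - 96060*a^3 - 588778*a^4 - 2119048*a^5 - 4974904*a^6 - 8003008*a^7 - 9017680*a^8 - 7150784*a^9 - 3952320*a^10 - 1483264*a^11 - 358656*a^12 - 50176*a^13 - 3072*a^14)) * m0"
    by (simp only: b)
  also have "\<dots> = (- (23457120) - 68526880*a - 126872672*a^2 - 289578688*a^3 - 512215296*a^4 - 485594112*a^5 - 236942848*a^6 - 56531968*a^7 - 5210112*a^8) * ((- (21*a^2) - 206*a^3 - 836*a^4 - 1792*a^5 - 2152*a^6 - 1424*a^7 - 480*a^8 - 64*a^9) * m0) + (69584 - 64064*a + 218944*a^2 + 108544*a^3) * ((- (6975*a^2) - 96060*a^3 - 588778*a^4 - 2119048*a^5 - 4974904*a^6 - 8003008*a^7 - 9017680*a^8 - 7150784*a^9 - 3952320*a^10 - 1483264*a^11 - 358656*a^12 - 50176*a^13 - 3072*a^14) * m0)"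
    by (simp only: distrib_right mult.assoc)
  also have "\<dots> = 0" by (simp only: z5 z6 mult_zero_right add_0)
  finally show ?thesis by simp
qed

theorem lemma3p2:
  fixes \<alpha> :: complex
  assumes "Re \<alpha> > -1/2"
  shows "\<not> (\<exists>v k. is_form v \<and> (\<forall>n. k n \<noteq> 0) \<and>
            (\<forall>n m. v (P_poly n \<alpha> * P_poly m \<alpha>) = (if n = m then k n else 0)))"
proof
  assume "\<exists>v k. is_form v \<and> (\<forall>n. k n \<noteq> 0) \<and>
            (\<forall>n m. v (P_poly n \<alpha> * P_poly m \<alpha>) = (if n = m then k n else 0))"
  then obtain v k where v: "is_form v" and kn: "\<forall>n. k n \<noteq> 0"
    and orth: "\<forall>n m. v (P_poly n \<alpha> * P_poly m \<alpha>) = (if n = m then k n else 0)" by blast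
  define D where "D n = (-2)^n * pochhammer (\<alpha> + 1/2) n" for n
  have vP: "v (P_poly n \<alpha> * P_poly m \<alpha>) = v (pp \<alpha> n * pp \<alpha> m) / (D n * D m)" for n m
    unfolding P_poly_eq D_def[symmetric] mult_smult_left mult_smult_right
    by (simp add: form_smult[OF v])
  have Dnz: "D n \<noteq> 0" for n
  proof
    assume "D n = 0"
    then have "v (P_poly n \<alpha> * P_poly n \<alpha>) = 0" by (simp add: vP)
    with orth kn show False by auto
  qed
  have z: "v (pp \<alpha> n * pp \<alpha> m) = 0" if "n \<noteq> m" for n m
  proof -
    have "v (pp \<alpha> n * pp \<alpha> m) / (D n * D m) = 0" using orth that vP by simp
    then show ?thesis using Dnz by simp
  qed
  have nz: "v (pp \<alpha> n * pp \<alpha> n) \<noteq> 0" for n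
    using orth kn vP[of n n] by auto
  have pp0: "pp \<alpha> 0 = 1" by (simp add: pp_def)
  have c0: "2 * \<alpha> + 1 \<noteq> 0" using assms by (auto simp: complex_eq_iff)
  have c2: "2 * \<alpha> + 3 \<noteq> 0" using assms by (auto simp: complex_eq_iff)
  have m0: "mom v 0 \<noteq> 0" using nz[of 0] by (simp add: pp0 mom_def)
  have w: "v (pp \<alpha> n) = 0" if "n \<noteq> 0" for n using z[of 0 n] that by (simp add: pp0)
  have h1: "(\<alpha>^2) * mom v 0 + ((-(2*\<alpha>+1)) * mom v 1) = 0" using w[of 1] vpp1[OF v, of \<alpha>] by simp
  have h2: "(\<alpha>^4) * mom v 0 + ((-(1+4*\<alpha>+6*\<alpha>^2+4*\<alpha>^3)) * mom v 1 + ((3+8*\<alpha>+4*\<alpha>^2) * mom v 2)) = 0" using w[of 2] vpp2[OF v, of \<alpha>] by simp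
  have h3: "(\<alpha>^6) * mom v 0 + ((-(1+6*\<alpha>+15*\<alpha>^2+20*\<alpha>^3+15*\<alpha>^4+6*\<alpha>^5)) * mom v 1 + ((15+58*\<alpha>+77*\<alpha>^2+48*\<alpha>^3+12*\<alpha>^4) * mom v 2 + ((-(15+46*\<alpha>+36*\<alpha>^2+8*\<alpha>^3)) * mom v 3))) = 0" using w[of 3] vpp3[OF v, of \<alpha>] by simp
  have h4: "(\<alpha>^8) * mom v 0 + ((-(1+8*\<alpha>+28*\<alpha>^2+56*\<alpha>^3+70*\<alpha>^4+56*\<alpha>^5+28*\<alpha>^6+8*\<alpha>^7)) * mom v 1 + ((63+312*\<alpha>+612*\<alpha>^2+648*\<alpha>^3+402*\<alpha>^4+144*\<alpha>^5+24*\<alpha>^6) * mom v 2 + ((-(210+824*\<alpha>+1116*\<alpha>^2+728*\<alpha>^3+240*\<alpha>^4+32*\<alpha>^5)) * mom v 3 + ((105+352*\<alpha>+344*\<alpha>^2+128*\<alpha>^3+16*\<alpha>^4) * mom v 4)))) = 0" using w[of 4] vpp4[OF v, of \<alpha>] by simp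
  have s2: "vs v 1 (pp \<alpha> 2) = 0"
    using z[of 1 2] vpp1_mult[OF v, of \<alpha> "pp \<alpha> 2"] w[of 2] c0 by simp
  have s3: "vs v 1 (pp \<alpha> 3) = 0"
    using z[of 1 3] vpp1_mult[OF v, of \<alpha> "pp \<alpha> 3"] w[of 3] c0 by simp
  have h5: "(\<alpha>^4) * mom v 1 + ((-(1+4*\<alpha>+6*\<alpha>^2+4*\<alpha>^3)) * mom v 2 + ((3+8*\<alpha>+4*\<alpha>^2) * mom v 3)) = 0" using s2 vspp2[OF v, of \<alpha>] by simp
  have h6: "(\<alpha>^6) * mom v 1 + ((-(1+6*\<alpha>+15*\<alpha>^2+20*\<alpha>^3+15*\<alpha>^4+6*\<alpha>^5)) * mom v 2 + ((15+58*\<alpha>+77*\<alpha>^2+48*\<alpha>^3+12*\<alpha>^4) * mom v 3 + ((-(15+46*\<alpha>+36*\<alpha>^2+8*\<alpha>^3)) * mom v 4))) = 0" using s3 vspp3[OF v, of \<alpha>] by simp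
  have "2*\<alpha>^2*(2*\<alpha>+1)^2*(2*\<alpha>+3) * mom v 0 = 0"
    by (rule elim_alg[OF h1 h2 h3 h4 h5 h6])
  then have a0: "\<alpha> = 0" using m0 c0 c2 by simp
  have m1: "mom v 1 = 0" using h1 a0 by simp
  have m2: "mom v 2 = 0" using h2 a0 m1 by simp
  have "vs v 1 (pp \<alpha> 1) = \<alpha>^2 * mom v 1 + (-(2*\<alpha>+1)) * mom v 2"
    unfolding pp1 by (simp only: form_monk[OF v] form_mon0[OF v] add_0_right)
  then have "v (pp \<alpha> 1 * pp \<alpha> 1) = 0"
    using vpp1_mult[OF v, of \<alpha> "pp \<alpha> 1"] w[of 1] m1 m2 by simp
  with nz[of 1] show False by simp
qed

end
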